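(* Let $\Gamma$ be a finite group, let $\mathcal{S}_\Gamma$ be a Schur ring over $\Gamma$ with basis $\mathcal{B}[\mathcal{S}_\Gamma]$, and let $\gamma \in \Gamma$ have odd order $n$. Let $r$ and $t$ be integers such that $r - t$ is relatively prime to $n$. If $\gamma^r + \gamma^t$ is an element of $\mathcal{B}[\mathcal{S}_\Gamma]$, then $\gamma^s + \gamma^{-s}$ is also an element of $\mathcal{B}[\mathcal{S}_\Gamma]$ for every integer $s$ relatively prime to $n$.
   Context: For a subset $X \subseteq \Gamma$ write $\overline{X} = \sum_{x \in X} x \in \mathbb{Z}[\Gamma]$ (a "simple quantity"), and $X^{-1} = \{x^{-1} : x \in X\}$. A Schur ring over $\Gamma$ is a subring $\mathcal{S}$ of the group ring $\mathbb{Z}[\Gamma]$, closed under addition, multiplication and multiplication by integers, for which there is a partition $\{B_0, B_1, \dots, B_{r-1}\}$ of $\Gamma$ with $B_0 = \{1\}$ such that every element of $\mathcal{S}$ has a unique representation $\sum_{i} \beta_i \overline{B}_i$ with integer coefficients, $\sum_i \overline{B}_i = \overline{\Gamma}$, and for each $i$ there is $j$ with $\overline{B}_j = \overline{B_i^{-1}}$. The set $\{\overline{B}_0, \dots, \overline{B}_{r-1}\}$ is the basis $\mathcal{B}[\mathcal{S}]$ of the Schur ring, and its members are the basic elements. Thus "$\gamma^r + \gamma^t \in \mathcal{B}[\mathcal{S}_\Gamma]$" means $\{\gamma^r, \gamma^t\}$ is one of the basic sets. *)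

theory Defs
  imports "HOL-Algebra.Multiplicative_Group"
begin

text \<open>The integral group ring Z[G] of a finite group G: integer-valued functions
  on the carrier (zero outside it). Addition and integer scaling are pointwise,
  multiplication is convolution.\<close>

definition grp_ring :: "('a, 'b) monoid_scheme \<Rightarrow> ('a \<Rightarrow> int) set" where
  "grp_ring G = {f. \<forall>x. x \<notin> carrier G \<longrightarrow> f x = 0}"

definition grp_ring_add :: "('a \<Rightarrow> int) \<Rightarrow> ('a \<Rightarrow> int) \<Rightarrow> ('a \<Rightarrow> int)" where
  "grp_ring_add f g = (\<lambda>x. f x + g x)"

definition grp_ring_smult :: "int \<Rightarrow> ('a \<Rightarrow> int) \<Rightarrow> ('a \<Rightarrow> int)" where
  "grp_ring_smult k f = (\<lambda>x. k * f x)"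

definition grp_ring_mult ::
  "('a, 'b) monoid_scheme \<Rightarrow> ('a \<Rightarrow> int) \<Rightarrow> ('a \<Rightarrow> int) \<Rightarrow> ('a \<Rightarrow> int)" where
  "grp_ring_mult G f g =
     (\<lambda>x. if x \<in> carrier G
           then (\<Sum>y\<in>carrier G. f y * g (inv\<^bsub>G\<^esub> y \<otimes>\<^bsub>G\<^esub> x)) else 0)"

definition grp_elem :: "'a \<Rightarrow> ('a \<Rightarrow> int)" where
  "grp_elem g = (\<lambda>x. if x = g then 1 else 0)"

text \<open>Simple quantity: overline X = sum of the elements of X.\<close>
definition simple_qty :: "'a set \<Rightarrow> ('a \<Rightarrow> int)" where
  "simple_qty X = (\<lambda>x. if x \<in> X then 1 else 0)"

definition lin_comb :: "'a set set \<Rightarrow> ('a set \<Rightarrow> int) \<Rightarrow> ('a \<Rightarrow> int)" where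
  "lin_comb P \<beta> = (\<lambda>x. \<Sum>B\<in>P. \<beta> B * simple_qty B x)"

definition schur_ring ::
  "('a, 'b) monoid_scheme \<Rightarrow> ('a \<Rightarrow> int) set \<Rightarrow> 'a set set \<Rightarrow> bool" where
  "schur_ring G S P \<longleftrightarrow>
     S \<subseteq> grp_ring G \<and>
     (\<forall>f\<in>S. \<forall>g\<in>S. grp_ring_add f g \<in> S) \<and>
     (\<forall>f\<in>S. \<forall>g\<in>S. grp_ring_mult G f g \<in> S) \<and>
     (\<forall>k f. f \<in> S \<longrightarrow> grp_ring_smult k f \<in> S) \<and>
     (\<forall>B\<in>P. B \<subseteq> carrier G) \<and>
     (\<forall>B\<in>P. \<forall>C\<in>P. B \<noteq> C \<longrightarrow> B \<inter> C = {}) \<and>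
     \<Union>P = carrier G \<and>
     {\<one>\<^bsub>G\<^esub>} \<in> P \<and>
     S = {lin_comb P \<beta> | \<beta>. True} \<and>
     (\<forall>\<beta> \<beta>'. lin_comb P \<beta> = lin_comb P \<beta>' \<longrightarrow> (\<forall>B\<in>P. \<beta> B = \<beta>' B)) \<and>
     (\<lambda>x. \<Sum>B\<in>P. simple_qty B x) = simple_qty (carrier G) \<and>
     (\<forall>B\<in>P. \<exists>C\<in>P. simple_qty C = simple_qty ((\<lambda>x. inv\<^bsub>G\<^esub> x) ` B))"

definition schur_basis :: "'a set set \<Rightarrow> ('a \<Rightarrow> int) set" where
  "schur_basis P = simple_qty ` P"

end

theory Submission
  imports Defs
begin

lemma arith_solve:
  fixes a b :: int and n :: nat
  assumes "coprime a (int n)" "n > 0"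
  shows "\<exists>m::nat. int n dvd a * int m - b"
proof -
  have "gcd a (int n) = 1" using assms(1) by simp
  then obtain u v where uv: "u * a + v * int n = 1" using bezout_int[of a "int n"] by auto
  define q where "q = (b * u) div int n"
  define m where "m = nat ((b * u) mod int n)"
  have "int m = (b * u) mod int n" using assms(2) by (simp add: m_def)
  also have "\<dots> = b * u - int n * q" unfolding q_def by (metis minus_div_mult_eq_mod mult.commute)
  finally have m: "int m = b * u - int n * q" .
  have "a * int m - b = b * (u * a - 1) - int n * (a * q)" unfolding m by (simp add: algebra_simps)
  also have "u * a - 1 = - (v * int n)" using uv by simp
  finally have "a * int m - b = int n * (- b * v - a * q)" by (simp add: algebra_simps)
  then show ?thesis by (metis dvd_triv_left)
qed

lemma cop:
  fixes u r t :: int and n :: nat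
  assumes "coprime (r - t) (int n)" "int n dvd (2*u - (r - t))"
  shows "coprime u (int n)"
proof (rule coprimeI)
  fix d assume d: "d dvd u" "d dvd int n"
  then have "d dvd 2*u" by simp
  moreover have "d dvd (2*u - (r - t))" using d(2) assms(2) by (rule dvd_trans)
  ultimately have "d dvd (2*u - (2*u - (r - t)))" by (rule dvd_diff)
  then have "d dvd (r - t)" by simp
  then show "is_unit d" using d(2) assms(1) coprime_common_divisor by blast
qed

lemma simple_qty_le1: "simple_qty X x \<le> 1" "simple_qty X x \<ge> 0"
  by (auto simp: simple_qty_def)

lemma simple_qty_eq1: "simple_qty X x = 1 \<longleftrightarrow> x \<in> X"
  by (auto simp: simple_qty_def)

lemma simple_qty_inj: "simple_qty X = simple_qty Y \<Longrightarrow> X = Y"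
  by (metis simple_qty_eq1 subsetI subset_antisym)

lemma grp_elem_single: "grp_elem a = simple_qty {a}"
  by (auto simp: grp_elem_def simple_qty_def fun_eq_iff)

lemma mult_add_left: "grp_ring_mult G (grp_ring_add f g) h = grp_ring_add (grp_ring_mult G f h) (grp_ring_mult G g h)"
  by (auto simp: grp_ring_mult_def grp_ring_add_def fun_eq_iff sum.distrib algebra_simps)

lemma mult_add_right: "grp_ring_mult G h (grp_ring_add f g) = grp_ring_add (grp_ring_mult G h f) (grp_ring_mult G h g)"
  by (auto simp: grp_ring_mult_def grp_ring_add_def fun_eq_iff sum.distrib algebra_simps)

context group begin

context
  fixes S P
  assumes sr: "schur_ring G S P" and fin: "finite (carrier G)"
begin

lemma elem_mult:
  assumes a: "a \<in> carrier G" and b: "b \<in> carrier G"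
  shows "grp_ring_mult G (grp_elem a) (grp_elem b) = grp_elem (a \<otimes> b)"
proof (rule ext)
  fix x
  show "grp_ring_mult G (grp_elem a) (grp_elem b) x = grp_elem (a \<otimes> b) x"
  proof (cases "x \<in> carrier G")
    case True
    have "(\<Sum>y\<in>carrier G. grp_elem a y * grp_elem b (inv y \<otimes> x))
        = (\<Sum>y\<in>carrier G. if y = a then grp_elem b (inv a \<otimes> x) else 0)"
      by (rule sum.cong) (auto simp: grp_elem_def)
    also have "\<dots> = grp_elem b (inv a \<otimes> x)" using a fin by simp
    also have "\<dots> = grp_elem (a \<otimes> b) x"
    proof -
      have eq: "(inv a \<otimes> x = b) = (x = a \<otimes> b)" using inv_solve_left[OF b a True] by auto
      show ?thesis by (simp add: grp_elem_def eq)
    qed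
    finally show ?thesis using True by (simp add: grp_ring_mult_def)
  next
    case False
    then show ?thesis using a b by (auto simp: grp_ring_mult_def grp_elem_def)
  qed
qed

lemma S_add: "f \<in> S \<Longrightarrow> g \<in> S \<Longrightarrow> grp_ring_add f g \<in> S"
proof -
  have h: "\<forall>f\<in>S. \<forall>g\<in>S. grp_ring_add f g \<in> S" using sr[unfolded schur_ring_def] by (elim conjE) assumption
  then show "f \<in> S \<Longrightarrow> g \<in> S \<Longrightarrow> grp_ring_add f g \<in> S" by blast
qed
lemma S_mult: "f \<in> S \<Longrightarrow> g \<in> S \<Longrightarrow> grp_ring_mult G f g \<in> S"
proof -
  have h: "\<forall>f\<in>S. \<forall>g\<in>S. grp_ring_mult G f g \<in> S" using sr[unfolded schur_ring_def] by (elim conjE) assumption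
  then show "f \<in> S \<Longrightarrow> g \<in> S \<Longrightarrow> grp_ring_mult G f g \<in> S" by blast
qed
lemma S_smult: "f \<in> S \<Longrightarrow> grp_ring_smult k f \<in> S"
proof -
  have h: "\<forall>k f. f \<in> S \<longrightarrow> grp_ring_smult k f \<in> S" using sr[unfolded schur_ring_def] by (elim conjE) assumption
  then show "f \<in> S \<Longrightarrow> grp_ring_smult k f \<in> S" by blast
qed

lemma sr_part1: "\<forall>B\<in>P. B \<subseteq> carrier G"
  using sr[unfolded schur_ring_def] by (elim conjE) assumption

lemma sr_part2: "\<forall>B\<in>P. \<forall>C\<in>P. B \<noteq> C \<longrightarrow> B \<inter> C = {}"
  using sr[unfolded schur_ring_def] by (elim conjE) assumption

lemma sr_part3: "\<Union>P = carrier G"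
  using sr[unfolded schur_ring_def] by (elim conjE) assumption

lemma sr_part4: "{\<one>} \<in> P"
  using sr[unfolded schur_ring_def] by (elim conjE) assumption

lemma sr_part5: "S = {lin_comb P \<beta> | \<beta>. True}"
  using sr[unfolded schur_ring_def] by (elim conjE) assumption

lemma P_finite: "finite P"
proof -
  have "P \<subseteq> Pow (carrier G)" using sr_part1 by auto
  then show ?thesis using fin finite_subset by blast
qed

lemma P_disj: "B \<in> P \<Longrightarrow> C \<in> P \<Longrightarrow> y \<in> B \<Longrightarrow> y \<in> C \<Longrightarrow> B = C"
  using sr_part2 by blast

lemma P_cover: "y \<in> carrier G \<Longrightarrow> \<exists>B\<in>P. y \<in> B"
  using sr_part3 by blast

lemma one_P: "{\<one>} \<in> P"
  by (rule sr_part4)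

lemma block_in_S: "B \<in> P \<Longrightarrow> simple_qty B \<in> S"
proof -
  assume B: "B \<in> P"
  have "S = {lin_comb P \<beta> | \<beta>. True}" by (rule sr_part5)
  moreover have "lin_comb P (\<lambda>C. if C = B then 1 else 0) = simple_qty B"
  proof (rule ext)
    fix x
    have "lin_comb P (\<lambda>C. if C = B then 1 else 0) x = (\<Sum>C\<in>P. if C = B then simple_qty B x else 0)"
      unfolding lin_comb_def by (rule sum.cong) auto
    also have "\<dots> = simple_qty B x" using B P_finite by simp
    finally show "lin_comb P (\<lambda>C. if C = B then 1 else 0) x = simple_qty B x" .
  qed
  ultimately show ?thesis by (metis (mono_tags, lifting) mem_Collect_eq)
qed

lemma S_const:
  assumes f: "f \<in> S" and B: "B \<in> P" and y: "y \<in> B" and z: "z \<in> B"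
  shows "f y = f z"
proof -
  have "S = {lin_comb P \<beta> | \<beta>. True}" by (rule sr_part5)
  then obtain \<beta> where fb: "f = lin_comb P \<beta>" using f by blast
  have key: "lin_comb P \<beta> w = \<beta> B" if w: "w \<in> B" for w
  proof -
    have "lin_comb P \<beta> w = (\<Sum>C\<in>P. if C = B then \<beta> B else 0)"
      unfolding lin_comb_def
      by (rule sum.cong) (use w B P_disj in \<open>auto simp: simple_qty_def\<close>)
    also have "\<dots> = \<beta> B" using B P_finite by simp
    finally show ?thesis .
  qed
  show ?thesis using key[OF y] key[OF z] fb by simp
qed

lemma block_sub:
  assumes f: "f \<in> S" and y: "y \<in> carrier G"
  obtains B where "B \<in> P" "y \<in> B" "\<And>z. z \<in> B \<Longrightarrow> f z = f y"
  using P_cover[OF y] S_const[OF f] by blast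

lemma single_pow:
  assumes c: "c \<in> carrier G" and cP: "{c} \<in> P"
  shows "{c [^] (m::nat)} \<in> P"
proof -
  have inS: "grp_elem (c [^] m) \<in> S"
  proof (induction m)
    case 0
    then show ?case using block_in_S[OF one_P] by (simp add: grp_elem_single)
  next
    case (Suc m)
    have "grp_ring_mult G (grp_elem (c [^] m)) (grp_elem c) \<in> S"
      using S_mult[OF Suc block_in_S[OF cP]] by (simp add: grp_elem_single)
    then show ?case using c by (simp add: elem_mult)
  qed
  obtain B where B: "B \<in> P" "c [^] m \<in> B" "\<And>z. z \<in> B \<Longrightarrow> grp_elem (c [^] m) z = grp_elem (c [^] m) (c [^] m)"
    using block_sub[OF inS] c by blast
  have "z = c [^] m" if "z \<in> B" for z
    using B(3)[OF that] by (simp add: grp_elem_def split: if_splits)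
  then have "B = {c [^] m}" using B(2) by blast
  then show ?thesis using B(1) by simp
qed

end
end

theorem lemma2p1:
  fixes G (structure) and S :: "('a \<Rightarrow> int) set" and P :: "'a set set"
    and \<gamma> :: 'a and r t :: int
  assumes "group G" and "finite (carrier G)"
    and "schur_ring G S P"
    and "\<gamma> \<in> carrier G"
    and "odd (group.ord G \<gamma>)"
    and "coprime (r - t) (int (group.ord G \<gamma>))"
    and "grp_ring_add (grp_elem (\<gamma> [^] r)) (grp_elem (\<gamma> [^] t)) \<in> schur_basis P"
  shows "\<forall>s::int. coprime s (int (group.ord G \<gamma>)) \<longrightarrow>
           grp_ring_add (grp_elem (\<gamma> [^] s)) (grp_elem (\<gamma> [^] (- s))) \<in> schur_basis P"
proof -
  interpret group G by fact
  note sr = assms(3) and fin = assms(2) and gc = assms(4)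
  define n where "n = ord \<gamma>"
  have n0: "n > 0" using assms(5) unfolding n_def by (cases "ord \<gamma>") auto
  define pw where "pw = (\<lambda>i::int. \<gamma> [^] i)"
  define e where "e = (grp_elem :: 'a \<Rightarrow> 'a \<Rightarrow> int)"
  have pwc: "pw i \<in> carrier G" for i unfolding pw_def using gc by simp
  have pweq: "pw i = pw j \<longleftrightarrow> int n dvd (j - i)" for i j
    unfolding pw_def n_def using int_pow_eq[OF gc] .
  have pwm: "grp_ring_mult G (e (pw i)) (e (pw j)) = e (pw (i + j))" for i j
    unfolding e_def using elem_mult[OF sr fin pwc pwc] by (simp add: pw_def int_pow_mult[OF gc])
  define T where "T = grp_ring_add (e (pw r)) (e (pw t))"
  obtain B0 where B0: "B0 \<in> P" "T = simple_qty B0"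
    using assms(7) unfolding T_def e_def pw_def schur_basis_def by auto
  have rt: "pw r \<noteq> pw t"
  proof
    assume h: "pw r = pw t"
    have "T (pw r) = 2" using h by (simp add: T_def e_def grp_ring_add_def grp_elem_def)
    then show False using simple_qty_le1(1)[of B0 "pw r"] B0(2) by simp
  qed
  have ndvd: "\<not> int n dvd (t - r)" using rt pweq by simp
  have B0eq: "B0 = {pw r, pw t}"
  proof -
    have "x \<in> B0 \<longleftrightarrow> x = pw r \<or> x = pw t" for x
      using rt B0(2)[THEN fun_cong, of x] simple_qty_eq1[of B0 x]
      by (auto simp: T_def e_def grp_ring_add_def grp_elem_def split: if_splits)
    then show ?thesis by blast
  qed
  have TS: "T \<in> S" using B0 block_in_S[OF sr fin] by simp
  have eS: "e (pw i) \<in> S" if "{pw i} \<in> P" for i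
    using block_in_S[OF sr fin that] by (simp add: e_def grp_elem_single)
  have nosingle: "{pw s} \<notin> P" if cs: "coprime s (int n)" for s
  proof
    assume sP: "{pw s} \<in> P"
    obtain m :: nat where m: "int n dvd s * int m - r" using arith_solve[OF cs n0] by blast
    have "{pw s [^] m} \<in> P" using single_pow[OF sr fin pwc sP] .
    moreover have "pw s [^] m = pw r"
    proof -
      have "pw s [^] m = pw (s * int m)" unfolding pw_def
        by (simp add: int_pow_pow[OF gc] flip: int_pow_int)
      also have "\<dots> = pw r" unfolding pweq using m by (simp add: dvd_diff_commute)
      finally show ?thesis .
    qed
    ultimately have "{pw r} \<in> P" by simp
    then have "{pw r} = B0" using P_disj[OF sr fin _ B0(1), of "{pw r}" "pw r"] B0eq by simp
    then show False using B0eq rt by auto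
  qed
  define F where "F = grp_ring_mult G T T"
  have FS: "F \<in> S" unfolding F_def using S_mult[OF sr fin TS TS] .
  have Feq: "F = grp_ring_add (grp_ring_add (e (pw (r+r))) (e (pw (r+t)))) (grp_ring_add (e (pw (r+t))) (e (pw (t+t))))"
  proof -
    have tr: "t + r = r + t" by simp
    show ?thesis unfolding F_def T_def mult_add_left mult_add_right pwm tr ..
  qed
  have Fv: "F z = (if z = pw (r+r) then 1 else 0) + (if z = pw (r+t) then 1 else 0) + ((if z = pw (r+t) then 1 else 0) + (if z = pw (t+t) then 1 else 0))" for z
    unfolding Feq e_def grp_ring_add_def grp_elem_def ..
  have ndvd2: "\<not> int n dvd (r - t)" using ndvd by (simp add: dvd_diff_commute)
  have ne1: "pw (r+r) \<noteq> pw (r+t)" unfolding pweq using ndvd by simp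
  have ne2: "pw (t+t) \<noteq> pw (r+t)" unfolding pweq using ndvd2 by simp
  have ne3: "pw (r+r) \<noteq> pw (t+t)"
  proof
    assume "pw (r+r) = pw (t+t)"
    then have "int n dvd (t + t - (r + r))" using pweq by blast
    moreover have "t + t - (r + r) = 2 * (t - r)" by simp
    ultimately have "int n dvd 2 * (t - r)" by simp
    moreover have "coprime (int n) 2" using assms(5) unfolding n_def by simp
    ultimately have "int n dvd (t - r)" using coprime_dvd_mult_right_iff by blast
    then show False using ndvd by simp
  qed
  have Fc: "F (pw (r+t)) = 2" using ne1 ne2 unfolding Fv by simp
  obtain Bc where Bc: "Bc \<in> P" "pw (r+t) \<in> Bc" "\<And>z. z \<in> Bc \<Longrightarrow> F z = F (pw (r+t))"
    using block_sub[OF sr fin FS pwc] by blast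
  have "Bc = {pw (r+t)}"
  proof -
    have "z = pw (r+t)" if z: "z \<in> Bc" for z
    proof (rule ccontr)
      assume zne: "z \<noteq> pw (r+t)"
      have "F z = 2" using Bc(3)[OF z] Fc by simp
      then have "z = pw (r+r) \<and> z = pw (t+t)" using zne unfolding Fv
        by (simp split: if_splits)
      then show False using ne3 by metis
    qed
    then show ?thesis using Bc(2) by blast
  qed
  with Bc have cP: "{pw (r+t)} \<in> P" by simp
  define m where "m = ((n + 1) div 2) * (n - 1)"
  have ev: "even (n + 1)" using assms(5) unfolding n_def by simp
  have h2: "2 * ((n + 1) div 2) = n + 1" using ev by simp
  have m2: "2 * m = (n + 1) * (n - 1)" unfolding m_def mult.assoc[symmetric] h2 ..
  define D where "D = (r + t) * int m"
  have dP: "{pw D} \<in> P"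
  proof -
    have "{pw (r+t) [^] m} \<in> P" using single_pow[OF sr fin pwc cP] .
    moreover have "pw (r+t) [^] m = pw D" unfolding pw_def D_def
      by (simp add: int_pow_pow[OF gc] flip: int_pow_int)
    ultimately show ?thesis by simp
  qed
  define u where "u = r + D"
  define W where "W = (\<lambda>j. grp_ring_add (e (pw j)) (e (pw (- j))))"
  have key2: "r + t + 2 * D = (r + t) * (int n * int n)"
  proof -
    have "int (2 * m) = int ((n + 1) * (n - 1))" using m2 by simp
    then have "2 * int m = (int n + 1) * (int n - 1)" using n0 by (simp add: of_nat_diff algebra_simps)
    then have nn: "int n * int n = 1 + 2 * int m" by (simp add: algebra_simps)
    have "r + t + 2 * D = (r + t) * (1 + 2 * int m)" unfolding D_def by (simp add: algebra_simps)
    then show ?thesis using nn by simp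
  qed
  have WuS: "W u \<in> S"
  proof -
    have "grp_ring_mult G T (e (pw D)) \<in> S" using S_mult[OF sr fin TS eS[OF dP]] .
    moreover have "grp_ring_mult G T (e (pw D)) = W u"
    proof -
      have "pw (t + D) = pw (- u)" unfolding pweq u_def
      proof -
        have "- (r + D) - (t + D) = - ((r + t) * (int n * int n))" using key2 by simp
        then show "int n dvd - (r + D) - (t + D)" by simp
      qed
      then show ?thesis unfolding T_def W_def by (simp add: mult_add_left pwm u_def)
    qed
    ultimately show ?thesis by simp
  qed
  have cu: "coprime u (int n)"
  proof (rule cop[OF assms(6)[folded n_def]])
    have "2 * u - (r - t) = (r + t) * (int n * int n)" using key2 unfolding u_def by simp
    then show "int n dvd 2 * u - (r - t)" by simp
  qed
  have Wv: "W j z = (if z = pw j then 1 else 0) + (if z = pw (- j) then 1 else 0)" for j z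
    unfolding W_def e_def grp_ring_add_def grp_elem_def ..
  have rec: "W (u * (int k + 1)) = grp_ring_add (grp_ring_mult G (W u) (W (u * int k))) (grp_ring_smult (-1) (W (u * (int k - 1))))" for k :: nat
  proof -
    define a where "a = u * int k"
    have pr: "grp_ring_mult G (W u) (W a) = grp_ring_add (grp_ring_add (e (pw (u + a))) (e (pw (u + - a)))) (grp_ring_add (e (pw (- u + a))) (e (pw (- u + - a))))"
      unfolding W_def mult_add_left mult_add_right pwm by (simp add: grp_ring_add_def fun_eq_iff)
    have x1: "u * (int k + 1) = u + a" "- (u * (int k + 1)) = - u + - a"
      "u * (int k - 1) = - u + a" "- (u * (int k - 1)) = u + - a"
      unfolding a_def by (simp_all add: algebra_simps)
    show ?thesis unfolding a_def[symmetric] pr unfolding W_def x1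
      by (simp add: grp_ring_add_def grp_ring_smult_def fun_eq_iff)
  qed
  have W0: "W 0 \<in> S"
  proof -
    have "W 0 = grp_ring_smult 2 (simple_qty {\<one>})"
      unfolding W_def by (simp add: pw_def e_def grp_elem_single grp_ring_add_def grp_ring_smult_def fun_eq_iff)
    then show ?thesis using S_smult[OF sr fin block_in_S[OF sr fin one_P[OF sr fin]]] by simp
  qed
  have WS2: "W (u * int k) \<in> S \<and> W (u * (int k + 1)) \<in> S" for k :: nat
  proof (induction k)
    case 0
    then show ?case using W0 WuS by simp
  next
    case (Suc k)
    have "W (u * (int k + 1 + 1)) \<in> S"
    proof -
      have "W (u * (int (Suc k) + 1)) = grp_ring_add (grp_ring_mult G (W u) (W (u * int (Suc k)))) (grp_ring_smult (-1) (W (u * (int (Suc k) - 1))))"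
        by (rule rec)
      moreover have "grp_ring_add (grp_ring_mult G (W u) (W (u * int (Suc k)))) (grp_ring_smult (-1) (W (u * (int (Suc k) - 1)))) \<in> S"
      proof -
        have eq1: "u * int (Suc k) = u * (int k + 1)" by simp
        have eq2: "u * (int (Suc k) - 1) = u * int k" by simp
        have A: "W (u * int (Suc k)) \<in> S" unfolding eq1 using Suc by blast
        have B: "W (u * (int (Suc k) - 1)) \<in> S" unfolding eq2 using Suc by blast
        show ?thesis by (rule S_add[OF sr fin S_mult[OF sr fin WuS A] S_smult[OF sr fin B]])
      qed
      ultimately show ?thesis by simp
    qed
    moreover have "W (u * int (Suc k)) \<in> S" using Suc by (simp add: add.commute)
    moreover have "u * (int k + 1 + 1) = u * (int (Suc k) + 1)" by simp
    ultimately show ?case by simp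
  qed
  show ?thesis
  proof (intro allI impI)
    fix s :: int
    assume cs0: "coprime s (int (ord \<gamma>))"
    then have cs: "coprime s (int n)" by (simp add: n_def)
    obtain k :: nat where k: "int n dvd u * int k - s" using arith_solve[OF cu n0] by blast
    have Weq: "W (u * int k) = W s"
    proof -
      have "pw (u * int k) = pw s" unfolding pweq using k by (simp add: dvd_diff_commute)
      moreover have "pw (- (u * int k)) = pw (- s)" unfolding pweq using k by simp
      ultimately show ?thesis unfolding W_def by simp
    qed
    have WsS: "W s \<in> S" using WS2[of k] Weq by simp
    have sne: "pw s \<noteq> pw (- s)"
    proof
      assume "pw s = pw (- s)"
      then have "int n dvd (- s - s)" using pweq by blast
      moreover have "- s - s = - (2 * s)" by simp
      ultimately have "int n dvd 2 * s" by simp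
      moreover have "coprime (int n) 2" using assms(5) unfolding n_def by simp
      ultimately have ns: "int n dvd s" by (simp add: coprime_dvd_mult_right_iff)
      have "is_unit (int n)" by (rule coprime_common_divisor[OF cs ns dvd_refl])
      then have "n = 1" by simp
      then show False using ndvd by simp
    qed
    obtain Bs where Bs: "Bs \<in> P" "pw s \<in> Bs" "\<And>z. z \<in> Bs \<Longrightarrow> W s z = W s (pw s)"
      using block_sub[OF sr fin WsS pwc] by blast
    have Ws1: "W s (pw s) = 1" using sne unfolding Wv by simp
    have sub: "Bs \<subseteq> {pw s, pw (- s)}"
    proof
      fix z assume z: "z \<in> Bs"
      have "W s z = 1" using Bs(3)[OF z] Ws1 by simp
      then show "z \<in> {pw s, pw (- s)}" unfolding Wv by (simp split: if_splits)
    qed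
    have "pw (- s) \<in> Bs"
    proof (rule ccontr)
      assume "pw (- s) \<notin> Bs"
      then have "Bs = {pw s}" using sub Bs(2) by blast
      then show False using nosingle[OF cs] Bs(1) by simp
    qed
    then have "Bs = {pw s, pw (- s)}" using sub Bs(2) by blast
    then have "W s = simple_qty Bs" using sne
      unfolding fun_eq_iff Wv by (simp add: simple_qty_def)
    then have "W s \<in> schur_basis P" using Bs(1) by (simp add: schur_basis_def)
    then show "grp_ring_add (grp_elem (\<gamma> [^] s)) (grp_elem (\<gamma> [^] (- s))) \<in> schur_basis P"
      by (simp add: W_def e_def pw_def)
  qed
qed

end
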